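(* Let $\gamma>0$ and $s\in(0,1)$, and let $$f_{\rm EH}(x)=(1-s)\,\phi(x;0,1)+s\int_0^\infty \phi(x;0,u)\,H(u;\gamma)\,du,\qquad x\in\mathbb{R},$$ where $\phi(\cdot;0,u)$ is the $N(0,u)$ density and $H(u;\gamma)=\frac{\gamma}{1+u}\{1+\log(1+u)\}^{-1-\gamma}$, $u>0$. Then $f_{\rm EH}(x)\approx |x|^{-1}(\log|x|)^{-1-\gamma}$ for large $|x|$.
   Context: Here $g(x)\approx h(x)$ for large $|x|$ means that $g(x)/h(x)$ converges to a finite positive constant as $|x|\to\infty$. *)

theory Defs
  imports "HOL-Probability.Probability"
begin

definition H_mix :: "real \<Rightarrow> real \<Rightarrow> real" where
  "H_mix \<gamma> u = \<gamma> / (1 + u) * (1 + ln (1 + u)) powr (-1 - \<gamma>)"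

text \<open>The density f_EH; phi(x;0,u) is the N(0,u) density, i.e. normal_density 0 (sqrt u) x
  (the library's normal_density takes the standard deviation).\<close>
definition f_EH :: "real \<Rightarrow> real \<Rightarrow> real \<Rightarrow> real" where
  "f_EH \<gamma> s x = (1 - s) * normal_density 0 1 x
     + s * (LBINT u:{0<..}. normal_density 0 (sqrt u) x * H_mix \<gamma> u)"

end

theory Submission
  imports Defs "HOL-Real_Asymp.Real_Asymp"
begin


lemma powr_tail_integrable:
  "integrable lborel (\<lambda>t::real. indicator {1..} t * t powr (-3/2))"
proof -
  have "(\<lambda>t::real. t powr (-3/2)) integrable_on {1..}"
    using has_integral_powr_to_inf[of "-3/2" 1] unfolding integrable_on_def by auto
  then have "(\<lambda>t::real. t powr (-3/2)) absolutely_integrable_on {1..}"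
    by (rule nonnegative_absolutely_integrable_1) auto
  then have "integrable lebesgue (\<lambda>t::real. indicator {1..} t *\<^sub>R t powr (-3/2))"
    by (simp add: set_integrable_def)
  then have "integrable lebesgue (\<lambda>t::real. indicator {1..} t * t powr (-3/2))" by simp
  then show ?thesis
    by (subst (asm) integrable_completion) auto
qed

lemma bounded_at_top_cont:
  fixes h :: "real \<Rightarrow> real"
  assumes c: "continuous_on {a..} h" and l: "(h \<longlongrightarrow> 0) at_top"
  shows "\<exists>M. \<forall>y\<ge>a. \<bar>h y\<bar> \<le> M"
proof -
  from l have "\<forall>\<^sub>F y in at_top. \<bar>h y\<bar> < 1"
    by (auto simp: tendsto_iff dist_real_def dest!: spec[of _ 1])
  then obtain Y where Y: "\<And>y. y \<ge> Y \<Longrightarrow> \<bar>h y\<bar> < 1" by (auto simp: eventually_at_top_linorder)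
  have "compact (h ` {a..max a Y})"
    by (rule compact_continuous_image[OF continuous_on_subset[OF c]]) auto
  then obtain B where B: "\<And>z. z \<in> h ` {a..max a Y} \<Longrightarrow> norm z \<le> B"
    using compact_imp_bounded bounded_iff by metis
  show ?thesis
  proof (intro exI allI impI)
    fix y assume "y \<ge> a"
    show "\<bar>h y\<bar> \<le> max B 1"
    proof (cases "y \<le> max a Y")
      case True then show ?thesis using B[of "h y"] \<open>y \<ge> a\<close> by force
    next
      case False then have "\<bar>h y\<bar> < 1" using Y[of y] by auto then show ?thesis by linarith
    qed
  qed
qed



definition K :: "real \<Rightarrow> real \<Rightarrow> real" where
  "K g t = g / sqrt (2*pi*t) * exp (-1/(2*t))"
definition W :: "real \<Rightarrow> real \<Rightarrow> real" where
  "W g t = K g t / t * (1 + max 0 (-ln t)) powr (1+g)"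

lemma W_nonneg: "g > 0 \<Longrightarrow> t > 0 \<Longrightarrow> W g t \<ge> 0"
  unfolding W_def K_def by simp

lemma W_small:
  assumes "0 < t" "t \<le> 1"
  shows "W g t = g / sqrt (2*pi) * ((1/t) * sqrt (1/t) * exp (-(1/t)/2) * (1 + ln (1/t)) powr (1+g))"
proof -
  have l: "ln (1/t) = - ln t" using assms by (simp add: ln_div)
  have m: "max 0 (-ln t) = - ln t" using assms by simp
  have s: "sqrt (2*pi*t) = sqrt (2*pi) * sqrt t" by (simp add: real_sqrt_mult)
  have e: "-1/(2*t) = -(1/t)/2" by simp
  show ?thesis unfolding W_def K_def l m s e using assms
    by (simp add: real_sqrt_divide field_simps)
qed

lemma W_big:
  assumes "1 \<le> t" "g > 0"
  shows "W g t \<le> g / sqrt (2*pi) * t powr (-3/2)"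
proof -
  have m: "max 0 (-ln t) = 0" using assms by simp
  have "t powr (3/2) = t powr (1 + 1/2)" by simp
  also have "\<dots> = t powr 1 * t powr (1/2)" by (rule powr_add)
  finally have "t powr (3/2) = t powr 1 * t powr (1/2)" .
  then have p: "t powr (-3/2) = 1 / (t * sqrt t)" using assms
    by (simp add: powr_minus powr_half_sqrt divide_simps)
  have s: "sqrt (2*pi*t) = sqrt (2*pi) * sqrt t" by (simp add: real_sqrt_mult)
  have "exp (-1/(2*t)) \<le> 1" using assms by simp
  then show ?thesis unfolding W_def K_def m p s using assms
    by (simp add: divide_simps mult_left_le)
qed

lemma W_meas: "(\<lambda>t. indicator {0<..} t * W g t) \<in> borel_measurable lborel"
  unfolding W_def K_def by measurable

lemma W_integrable:
  assumes g: "g > 0"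
  shows "integrable lborel (\<lambda>t. indicator {0<..} t * W g t)"
proof -
  define h where "h y = y * sqrt y * exp (-y/2) * (1 + ln y) powr (1+g)" for y
  have "continuous_on {1..} h" unfolding h_def
    apply (intro continuous_intros)
    apply auto
    by (smt (verit) ln_ge_zero)
  moreover have "(h \<longlongrightarrow> 0) at_top" unfolding h_def using g by real_asymp
  ultimately obtain M where M: "\<And>y. y \<ge> 1 \<Longrightarrow> \<bar>h y\<bar> \<le> M"
    using bounded_at_top_cont by blast
  let ?B = "\<lambda>t. indicator {0<..1} t * (g / sqrt (2*pi) * M) + g / sqrt (2*pi) * (indicator {1..} t * t powr (-3/2))"
  have i1: "integrable lborel (\<lambda>t. indicator {0<..1::real} t * (g / sqrt (2*pi) * M))"
    by (intro integrable_mult_left integrable_real_indicator) auto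
  have i2: "integrable lborel (\<lambda>t. g / sqrt (2*pi) * (indicator {1..} t * t powr (-3/2)))"
    using powr_tail_integrable by (intro integrable_mult_right) auto
  have "integrable lborel ?B" using Bochner_Integration.integrable_add[OF i1 i2] .
  moreover have "AE t in lborel. norm (indicator {0<..} t * W g t) \<le> norm (?B t)"
  proof (intro AE_I2)
    fix t :: real
    have B0: "?B t \<ge> 0"
    proof -
      have "M \<ge> 0" using M[of 1] by linarith
      then show ?thesis using g by (auto simp: indicator_def)
    qed
    consider "t \<le> 0" | "0 < t" "t \<le> 1" | "t > 1" by linarith
    then have "\<bar>indicator {0<..} t * W g t\<bar> \<le> ?B t"
    proof cases
      case 1 then show ?thesis using B0 by (simp add: indicator_def)
    next
      case 2
      have "W g t \<le> g / sqrt (2*pi) * M"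
        unfolding W_small[OF 2] h_def[symmetric]
        using M[of "1/t"] 2 g by (intro mult_left_mono) auto
      moreover have gp: "g / sqrt (2*pi) > 0" using g by simp
      ultimately show ?thesis using 2 g W_nonneg[of g t]
        apply (auto simp: indicator_def) using gp by linarith
    next
      case 3 then show ?thesis using W_big[of t g] g W_nonneg[of g t]
        by (auto simp: indicator_def)
    qed
    then show "norm (indicator {0<..} t * W g t) \<le> norm (?B t)" using B0 by simp
  qed
  ultimately show ?thesis
    using Bochner_Integration.integrable_bound W_meas by blast
qed



definition G :: "real \<Rightarrow> real \<Rightarrow> real \<Rightarrow> real" where
  "G g x t = x\<^sup>2/(1+x\<^sup>2*t) * K g t * ((2*ln x) powr (1+g) * (1+ln(1+x\<^sup>2*t)) powr (-1-g))"

lemma G_bound: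
  assumes x: "x > 1" and t: "t > 0" and g: "g > 0"
  shows "\<bar>G g x t\<bar> \<le> W g t"
proof -
  define L where "L = ln (1+x\<^sup>2*t)"
  define m where "m = max 0 (-ln t)"
  have xt: "x\<^sup>2*t > 0" using x t by simp
  have L0: "L \<ge> 0" unfolding L_def using xt by simp
  have m0: "m \<ge> 0" unfolding m_def by simp
  have lx: "ln x > 0" using x by simp
  have "x\<^sup>2 \<le> (1+x\<^sup>2*t)/t" using t by (simp add: field_simps)
  moreover have p: "(1+x\<^sup>2*t)/t > 0" using xt t by (simp add: add_pos_pos)
  ultimately have "ln (x\<^sup>2) \<le> ln ((1+x\<^sup>2*t)/t)" using x by (subst ln_le_cancel_iff) auto
  also have "\<dots> = L - ln t" unfolding L_def using t xt by (simp add: ln_div)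
  finally have l2: "ln (x\<^sup>2) \<le> L - ln t" .
  have "ln (x\<^sup>2) = 2 * ln x" using x by (simp add: ln_realpow)
  with l2 have "2 * ln x \<le> L - ln t" by simp
  also have "\<dots> \<le> L + m" unfolding m_def by simp
  also have "\<dots> \<le> (1+L)*(1+m)" using L0 m0 by (simp add: algebra_simps)
  finally have key: "2 * ln x / (1+L) \<le> 1+m" using L0 by (simp add: divide_simps mult.commute)
  have R: "(2*ln x) powr (1+g) * (1+L) powr (-1-g) = (2 * ln x / (1+L)) powr (1+g)"
  proof -
    have "(1+L) powr (-1-g) = inverse ((1+L) powr (1+g))"
      using powr_minus[of "1+L" "1+g"] by (simp add: algebra_simps)
    moreover have "(2 * ln x / (1+L)) powr (1+g) = (2*ln x) powr (1+g) / (1+L) powr (1+g)"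
      using L0 lx by (simp add: powr_divide)
    ultimately show ?thesis by (simp add: divide_inverse)
  qed
  have Rle: "(2 * ln x / (1+L)) powr (1+g) \<le> (1+m) powr (1+g)"
    using key lx L0 g by (intro powr_mono2) auto
  have a: "x\<^sup>2/(1+x\<^sup>2*t) \<le> 1/t" using t xt by (simp add: field_simps)
  have K0: "K g t \<ge> 0" unfolding K_def using g t by simp
  have "G g x t = x\<^sup>2/(1+x\<^sup>2*t) * K g t * (2 * ln x / (1+L)) powr (1+g)"
    unfolding G_def L_def[symmetric] R by simp
  also have "\<dots> \<le> 1/t * K g t * (1+m) powr (1+g)"
    using a Rle K0 xt t by (intro mult_mono) auto
  also have "\<dots> = W g t" unfolding W_def m_def by simp
  finally have "G g x t \<le> W g t" .
  moreover have "G g x t \<ge> 0" unfolding G_def K_def using xt g t lx by simp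
  ultimately show ?thesis by simp
qed



lemma scale_pt:
  assumes x: "x > 1"
  shows "x * (2*ln x) powr (1+g) * (x\<^sup>2 * (indicator {0<..} (x\<^sup>2*t) * (normal_density 0 (sqrt (x\<^sup>2*t)) x * H_mix g (x\<^sup>2*t))))
     = indicator {0<..} t * G g x t"
proof (cases "t > 0")
  case True
  have sq: "sqrt (2*pi*(sqrt (x\<^sup>2*t))\<^sup>2) = x * sqrt (2*pi*t)" using x True
    by (simp add: real_sqrt_mult mult_ac)
  have e: "- (x - 0)\<^sup>2 / (2 * (sqrt (x\<^sup>2 * t))\<^sup>2) = -1/(2*t)" using x True by (simp add: field_simps)
  have pos: "x\<^sup>2*t > 0" using x True by simp
  have sp: "sqrt (pi * (t * 2)) > 0" using True by simp
  show ?thesis using True x pos sp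
    unfolding normal_density_def sq e H_mix_def G_def K_def
    apply (simp add: indicator_def)
    apply (simp add: divide_simps)
    done
next
  case False
  then have "\<not> x\<^sup>2*t > 0" using x by (simp add: zero_less_mult_iff)
  then show ?thesis using False by (simp add: indicator_def)
qed

lemma scale:
  assumes x: "x > 1"
  shows "x * (2*ln x) powr (1+g) * (LBINT u:{0<..}. normal_density 0 (sqrt u) x * H_mix g u)
     = (\<integral>t. indicator {0<..} t * G g x t \<partial>lborel)"
proof -
  have "(LBINT u:{0<..}. normal_density 0 (sqrt u) x * H_mix g u)
     = (\<integral>u. indicator {0<..} u * (normal_density 0 (sqrt u) x * H_mix g u) \<partial>lborel)"
    by (simp add: set_lebesgue_integral_def)
  also have "\<dots> = \<bar>x\<^sup>2\<bar> *\<^sub>R (\<integral>t. indicator {0<..} (0 + x\<^sup>2*t) * (normal_density 0 (sqrt (0 + x\<^sup>2*t)) x * H_mix g (0 + x\<^sup>2*t)) \<partial>lborel)"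
    by (rule lborel_integral_real_affine) (use x in simp)
  finally have "x * (2*ln x) powr (1+g) * (LBINT u:{0<..}. normal_density 0 (sqrt u) x * H_mix g u)
      = (\<integral>t. x * (2*ln x) powr (1+g) * (x\<^sup>2 * (indicator {0<..} (x\<^sup>2*t) * (normal_density 0 (sqrt (x\<^sup>2*t)) x * H_mix g (x\<^sup>2*t)))) \<partial>lborel)"
    by simp
  also have "\<dots> = (\<integral>t. indicator {0<..} t * G g x t \<partial>lborel)"
    by (rule Bochner_Integration.integral_cong[OF refl], rule scale_pt[OF x])
  finally show ?thesis .
qed

lemma G_lim:
  assumes t: "t > 0" and g: "g > 0"
  shows "((\<lambda>x. G g x t) \<longlongrightarrow> K g t / t) at_top"
proof -
  have l1: "((\<lambda>x. x\<^sup>2/(1+x\<^sup>2*t)) \<longlongrightarrow> 1/t) at_top"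
    using t by (real_asymp simp: divide_simps)
  have l2: "((\<lambda>x::real. (2*ln x) powr (1+g) * (1+ln(1+x\<^sup>2*t)) powr (-1-g)) \<longlongrightarrow> 1) at_top"
    using t g by (real_asymp simp: divide_simps powr_add[symmetric])
  have "((\<lambda>x. G g x t) \<longlongrightarrow> 1/t * K g t * 1) at_top"
    unfolding G_def by (intro tendsto_mult l1 l2 tendsto_const)
  then show ?thesis by simp
qed

lemma main_lim:
  assumes g: "g > 0"
  shows "((\<lambda>x. \<integral>t. indicator {0<..} t * G g x t \<partial>lborel) \<longlongrightarrow> (\<integral>t. indicator {0<..} t * (K g t / t) \<partial>lborel)) at_top"
    and "integrable lborel (\<lambda>t. indicator {0<..} t * (K g t / t))"
proof -
  have m1: "(\<lambda>t. indicator {0<..} t * (K g t / t)) \<in> borel_measurable lborel"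
    unfolding K_def by measurable
  have m2: "\<And>x. (\<lambda>t. indicator {0<..} t * G g x t) \<in> borel_measurable lborel"
    unfolding G_def K_def by measurable
  have w: "integrable lborel (\<lambda>t. indicator {0<..} t * W g t)" using W_integrable[OF g] .
  have lim: "AE t in lborel. ((\<lambda>x. indicator {0<..} t * G g x t) \<longlongrightarrow> indicator {0<..} t * (K g t / t)) at_top"
  proof (intro AE_I2)
    fix t :: real
    show "((\<lambda>x. indicator {0<..} t * G g x t) \<longlongrightarrow> indicator {0<..} t * (K g t / t)) at_top"
    proof (cases "t > 0")
      case True then show ?thesis using G_lim[OF True g] by (simp add: indicator_def)
    qed (simp add: indicator_def)
  qed
  have bound: "\<forall>\<^sub>F x in at_top. AE t in lborel. norm (indicator {0<..} t * G g x t) \<le> indicator {0<..} t * W g t"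
  proof (rule eventually_mono[OF eventually_gt_at_top[of 1]])
    fix x :: real assume x: "x > 1"
    show "AE t in lborel. norm (indicator {0<..} t * G g x t) \<le> indicator {0<..} t * W g t"
    proof (intro AE_I2)
      fix t :: real
      show "norm (indicator {0<..} t * G g x t) \<le> indicator {0<..} t * W g t"
        using G_bound[OF x _ g, of t] by (auto simp: indicator_def)
    qed
  qed
  show "((\<lambda>x. \<integral>t. indicator {0<..} t * G g x t \<partial>lborel) \<longlongrightarrow> (\<integral>t. indicator {0<..} t * (K g t / t) \<partial>lborel)) at_top"
    by (rule integral_dominated_convergence_at_top[OF m1 m2 w lim bound])
  show "integrable lborel (\<lambda>t. indicator {0<..} t * (K g t / t))"
    by (rule integrable_dominated_convergence_at_top[OF m1 m2 w lim bound])
qed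

lemma J_pos:
  assumes g: "g > 0"
  shows "(\<integral>t. indicator {0<..} t * (K g t / t) \<partial>lborel) > 0"
proof -
  let ?f = "\<lambda>t. indicator {0<..} t * (K g t / t)"
  have i: "integrable lborel ?f" using main_lim(2)[OF g] .
  have nn: "AE t in lborel. 0 \<le> ?f t" by (intro AE_I2) (use g in \<open>auto simp: indicator_def K_def\<close>)
  have ge: "integral\<^sup>L lborel ?f \<ge> 0" by (rule integral_nonneg_AE[OF nn])
  have "integral\<^sup>L lborel ?f \<noteq> 0"
  proof
    assume "integral\<^sup>L lborel ?f = 0"
    then have "AE t in lborel. ?f t = 0" using integral_nonneg_eq_0_iff_AE[OF i nn] by simp
    then have "AE t in lborel. t \<notin> {0<..1::real}"
      apply (rule AE_mp)
      apply (rule AE_I2)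
      using g by (auto simp: indicator_def K_def)
    then have "emeasure lborel {0<..1::real} = 0"
      by (subst (asm) AE_iff_measurable[of "{0<..1}"]) auto
    then show False by simp
  qed
  with ge show ?thesis by simp
qed



lemma f_EH_even: "f_EH g s (-x) = f_EH g s x"
  unfolding f_EH_def normal_density_def by simp

lemma Q_eq:
  assumes x: "x > 1"
  shows "f_EH g s x / (inverse \<bar>x\<bar> * ln \<bar>x\<bar> powr (-1 - g))
    = (1-s) * (normal_density 0 1 x * x * ln x powr (1+g)) + s * (2 powr (-1-g) * (\<integral>t. indicator {0<..} t * G g x t \<partial>lborel))"
proof -
  define I where "I = (LBINT u:{0<..}. normal_density 0 (sqrt u) x * H_mix g u)"
  define P where "P = ln x powr (1+g)"
  have lx: "ln x > 0" using x by simp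
  have P0: "P > 0" unfolding P_def using lx by simp
  have Pm: "ln x powr (-1-g) = inverse P" unfolding P_def
    using powr_minus[of "ln x" "1+g"] by (simp add: algebra_simps)
  have two: "(2*ln x) powr (1+g) = 2 powr (1+g) * P" unfolding P_def using lx by (simp add: powr_mult)
  have 22: "2 powr (-1-g) * 2 powr (1+g) = (1::real)" by (simp add: powr_add[symmetric])
  have sc: "x * (2 powr (1+g) * P) * I = (\<integral>t. indicator {0<..} t * G g x t \<partial>lborel)"
    using scale[OF x, of g] unfolding I_def two .
  have "f_EH g s x / (inverse \<bar>x\<bar> * ln \<bar>x\<bar> powr (-1 - g)) = ((1-s) * normal_density 0 1 x + s * I) / (inverse x * inverse P)"
    unfolding f_EH_def I_def[symmetric] using x by (simp add: Pm)
  also have "\<dots> = ((1-s) * normal_density 0 1 x + s * I) * x * P"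
    using x P0 by (simp add: field_simps)
  also have "\<dots> = (1-s) * (normal_density 0 1 x * x * P) + s * (2 powr (-1-g) * (x * (2 powr (1+g) * P) * I))"
    using 22 by (simp add: algebra_simps)
  finally have eq: "f_EH g s x / (inverse \<bar>x\<bar> * ln \<bar>x\<bar> powr (-1 - g)) = (1-s) * (normal_density 0 1 x * x * P) + s * (2 powr (-1-g) * (x * (2 powr (1+g) * P) * I))" .
  show ?thesis unfolding sc[symmetric] P_def[symmetric] using eq .
qed

theorem proposition2p1:
  fixes \<gamma> s :: real
  assumes "\<gamma> > 0" and "0 < s" and "s < 1"
  shows "\<exists>c>0. ((\<lambda>x. f_EH \<gamma> s x / (inverse \<bar>x\<bar> * ln \<bar>x\<bar> powr (-1 - \<gamma>)))
                  \<longlongrightarrow> c) at_infinity"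
proof -
  define J where "J = (\<integral>t. indicator {0<..} t * (K \<gamma> t / t) \<partial>lborel)"
  define Q where "Q x = f_EH \<gamma> s x / (inverse \<bar>x\<bar> * ln \<bar>x\<bar> powr (-1 - \<gamma>))" for x
  define c where "c = s * (2 powr (-1-\<gamma>) * J)"
  have J0: "J > 0" unfolding J_def using J_pos[OF assms(1)] .
  have c0: "c > 0" unfolding c_def using J0 assms by simp
  have nd: "((\<lambda>x::real. normal_density 0 1 x * x * ln x powr (1+\<gamma>)) \<longlongrightarrow> 0) at_top"
    unfolding normal_density_def by real_asymp
  have "((\<lambda>x. (1-s) * (normal_density 0 1 x * x * ln x powr (1+\<gamma>)) + s * (2 powr (-1-\<gamma>) * (\<integral>t. indicator {0<..} t * G \<gamma> x t \<partial>lborel))) \<longlongrightarrow> (1-s) * 0 + s * (2 powr (-1-\<gamma>) * J)) at_top"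
    unfolding J_def by (intro tendsto_intros nd main_lim(1)[OF assms(1)])
  then have "((\<lambda>x. (1-s) * (normal_density 0 1 x * x * ln x powr (1+\<gamma>)) + s * (2 powr (-1-\<gamma>) * (\<integral>t. indicator {0<..} t * G \<gamma> x t \<partial>lborel))) \<longlongrightarrow> c) at_top"
    unfolding c_def by simp
  then have lim: "(Q \<longlongrightarrow> c) at_top"
  proof (rule Lim_transform_eventually)
    show "\<forall>\<^sub>F x in at_top. (1-s) * (normal_density 0 1 x * x * ln x powr (1+\<gamma>)) + s * (2 powr (-1-\<gamma>) * (\<integral>t. indicator {0<..} t * G \<gamma> x t \<partial>lborel)) = Q x"
      by (rule eventually_mono[OF eventually_gt_at_top[of 1]]) (unfold Q_def, rule Q_eq[symmetric])
  qed
  have ab0: "filterlim (\<lambda>x::real. norm x) at_top at_infinity"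
    by (rule filterlim_at_infinity_imp_norm_at_top[OF filterlim_ident])
  then have ab: "filterlim (\<lambda>x::real. \<bar>x\<bar>) at_top at_infinity" by simp
  have "((\<lambda>x. Q \<bar>x\<bar>) \<longlongrightarrow> c) at_infinity"
    by (rule filterlim_compose[OF lim ab])
  moreover have "Q \<bar>x\<bar> = Q x" for x
    unfolding Q_def by (cases "x \<ge> 0") (auto simp: f_EH_even[of _ _ x, symmetric])
  ultimately have "(Q \<longlongrightarrow> c) at_infinity" by simp
  then show ?thesis using c0 unfolding Q_def by blast
qed

end
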